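(* Let $p\ge1$ and let $u,v\in E_1$ be such that the sequences $(d^u_n)_{n}$ and $(d^v_n)_{n}$ are compatible. Then $\mathcal L^u$ and $\mathcal L^v$ are compatible.
   Context: $X=\{0,\dots,p\}$; $\mathcal G_{S_p}$ is generated by $e_1,\dots,e_p$ acting on $X^\infty$ by $e_i(0w)=i\,e_i(w)$, $e_i(iw)=0w$, $e_i(jw)=jw$ for $j\notin\{0,i\}$; $\Gamma^p_w$ is the Schreier graph on the orbit of $w$ (edges $x$—$e_i(x)$), with graph distance $d$. $E_1$ is the set of $w$ with $\Gamma^p_w$ one-ended; each $w\in E_1$ has an infinite decomposition $w=0^ka_1u_1a_2u_2\cdots$ ($k\ge0$, $a_j\in\{1,\dots,p\}$, $a_{j+1}\ne a_j$, $u_j\in\{0,a_j\}^\ast$ finite). Let $N_j=k+j+\sum_{\ell\le j}|u_\ell|$. The path of cycles of $w$ consists of the $e_{a_j}$-cycles $P^w_j$ with vertex sets $\{0,a_j\}^{N_j}a_{j+1}u_{j+1}\cdots$; $\mathcal L^w=(2^{N_j})_{j\ge1}$. Put $w(0)=w$ and $w(j)=0^{N_j}a_{j+1}u_{j+1}a_{j+2}u_{j+2}\cdots$ (the common vertex of $P^w_j$ and $P^w_{j+1}$), and $d^w_j=d(w(j-1),w(j))$ for $j\ge1$. Integer sequences $(x_i),(y_i)$ are compatible if there exist $l,h$ with $x_{l+n}=y_{h+n}$ for all $n$. *)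

theory Defs
  imports Main
begin

text \<open>Infinite words over X = {0,...,p} are functions nat => nat (letter n at position n),
  with all letters at most p.\<close>

definition word :: "nat \<Rightarrow> (nat \<Rightarrow> nat) \<Rightarrow> bool" where
  "word p w \<longleftrightarrow> (\<forall>n. w n \<le> p)"

text \<open>Generator e_i: e_i(0w) = i e_i(w), e_i(iw) = 0w, e_i(jw) = jw for j not in {0,i}.
  Unfolded: every position preceded only by zeros is rewritten (0 to i, i to 0),
  all later positions are unchanged.\<close>

definition gen :: "nat \<Rightarrow> (nat \<Rightarrow> nat) \<Rightarrow> (nat \<Rightarrow> nat)" where
  "gen i w = (\<lambda>n. if (\<forall>m<n. w m = 0)
                  then (if w n = 0 then i else if w n = i then 0 else w n)
                  else w n)"

definition adj :: "nat \<Rightarrow> (nat \<Rightarrow> nat) \<Rightarrow> (nat \<Rightarrow> nat) \<Rightarrow> bool" where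
  "adj p x y \<longleftrightarrow> (\<exists>i\<in>{1..p}. y = gen i x \<or> x = gen i y)"

definition orbit :: "nat \<Rightarrow> (nat \<Rightarrow> nat) \<Rightarrow> (nat \<Rightarrow> nat) set" where
  "orbit p w = {x. (adj p)\<^sup>*\<^sup>* w x}"

definition gdist :: "nat \<Rightarrow> (nat \<Rightarrow> nat) \<Rightarrow> (nat \<Rightarrow> nat) \<Rightarrow> nat" where
  "gdist p x y = (LEAST n. (adj p ^^ n) x y)"

definition conn_minus :: "nat \<Rightarrow> (nat \<Rightarrow> nat) \<Rightarrow> (nat \<Rightarrow> nat) set
     \<Rightarrow> (nat \<Rightarrow> nat) \<Rightarrow> (nat \<Rightarrow> nat) \<Rightarrow> bool" where
  "conn_minus p w K = (\<lambda>a b. adj p a b \<and> a \<in> orbit p w - K \<and> b \<in> orbit p w - K)\<^sup>*\<^sup>*"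

definition one_ended :: "nat \<Rightarrow> (nat \<Rightarrow> nat) \<Rightarrow> bool" where
  "one_ended p w \<longleftrightarrow> (\<forall>K. finite K \<longrightarrow>
     (\<exists>x\<in>orbit p w - K. infinite {y. conn_minus p w K x y}) \<and>
     (\<forall>x\<in>orbit p w - K. \<forall>y\<in>orbit p w - K.
        infinite {z. conn_minus p w K x z} \<and> infinite {z. conn_minus p w K y z}
        \<longrightarrow> conn_minus p w K x y))"

definition E1 :: "nat \<Rightarrow> (nat \<Rightarrow> nat) set" where
  "E1 p = {w. word p w \<and> one_ended p w}"

text \<open>Decomposition w = 0^k a_1 u_1 a_2 u_2 ... (a and us indexed from 1).
  Npos k us j = N_j = k + j + sum_{l<=j} |u_l|; N_0 = k.\<close>

definition Npos :: "nat \<Rightarrow> (nat \<Rightarrow> nat list) \<Rightarrow> nat \<Rightarrow> nat" where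
  "Npos k us j = k + j + (\<Sum>l\<in>{1..j}. length (us l))"

definition decomp :: "nat \<Rightarrow> (nat \<Rightarrow> nat) \<Rightarrow> nat \<Rightarrow> (nat \<Rightarrow> nat) \<Rightarrow> (nat \<Rightarrow> nat list) \<Rightarrow> bool" where
  "decomp p w k a us \<longleftrightarrow>
     (\<forall>n<k. w n = 0) \<and>
     (\<forall>j\<ge>1. a j \<in> {1..p} \<and> a (j+1) \<noteq> a j \<and> set (us j) \<subseteq> {0, a j} \<and>
        w (Npos k us (j-1)) = a j \<and>
        (\<forall>i<length (us j). w (Npos k us (j-1) + 1 + i) = us j ! i))"

text \<open>w(j) = 0^{N_j} a_{j+1} u_{j+1} ... , i.e. w with its first N_j letters replaced by 0;
  w(0) = w since the first N_0 = k letters of w are 0.\<close>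

definition wj :: "(nat \<Rightarrow> nat) \<Rightarrow> nat \<Rightarrow> (nat \<Rightarrow> nat list) \<Rightarrow> nat \<Rightarrow> (nat \<Rightarrow> nat)" where
  "wj w k us j = (\<lambda>n. if n < Npos k us j then 0 else w n)"

text \<open>Sequences indexed from 1 in the paper are represented shifted: entry n is the (n+1)-st term.\<close>

definition dseq :: "nat \<Rightarrow> (nat \<Rightarrow> nat) \<Rightarrow> nat \<Rightarrow> (nat \<Rightarrow> nat list) \<Rightarrow> nat \<Rightarrow> nat" where
  "dseq p w k us n = gdist p (wj w k us n) (wj w k us (n+1))"

definition Lseq :: "nat \<Rightarrow> (nat \<Rightarrow> nat list) \<Rightarrow> nat \<Rightarrow> nat" where
  "Lseq k us n = 2 ^ Npos k us (n+1)"

definition compatible :: "(nat \<Rightarrow> 'a) \<Rightarrow> (nat \<Rightarrow> 'a) \<Rightarrow> bool" where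
  "compatible x y \<longleftrightarrow> (\<exists>l h. \<forall>n. x (l+n) = y (h+n))"

end

theory Submission
  imports Defs
begin

definition Vv :: "nat \<Rightarrow> (nat \<Rightarrow> nat) \<Rightarrow> nat" where
  "Vv N z = (\<Sum>m<N. if z m = 0 then 2^m else 0)"

lemma geo2: "(\<Sum>m<n. (2::nat)^m) = 2^n - 1"
  by (induction n) auto

lemma sum_split3: "f < (N::nat) \<Longrightarrow> (\<Sum>m<N. g m) = (\<Sum>m<f. g m) + g f + (\<Sum>m\<in>{Suc f..<N}. (g m::nat))"
  by (metis Suc_le_eq lessThan_atLeast0 less_eq_nat.simps(1)
    sum.atLeast0_lessThan_Suc sum.atLeastLessThan_concat)

lemma V_le: "Vv N z \<le> 2^N - 1"
proof -
  have "Vv N z \<le> (\<Sum>m<N. (2::nat)^m)" unfolding Vv_def by (rule sum_mono) auto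
  then show ?thesis by (simp add: geo2)
qed

lemma V_lt: "Vv N z < 2^N"
proof -
  have "(2::nat)^N > 0" by simp
  then show ?thesis using V_le[of N z] by linarith
qed

lemma V_Suc: "Vv (Suc n) z = Vv n z + (if z n = 0 then 2^n else 0)"
  by (simp add: Vv_def)

lemma V_inj_aux: "a \<noteq> 0 \<Longrightarrow> \<forall>m<n. (z m = 0 \<or> z m = a) \<and> (z' m = 0 \<or> z' m = a) \<Longrightarrow>
   Vv n z = Vv n z' \<Longrightarrow> \<forall>m<n. z m = z' m"
proof (induction n)
  case 0 then show ?case by simp
next
  case (Suc n)
  have lt1: "Vv n z < 2^n" "Vv n z' < 2^n" by (rule V_lt)+
  have "z n = z' n"
  proof (rule ccontr)
    assume ne: "z n \<noteq> z' n"
    have "(z n = 0 \<and> z' n \<noteq> 0) \<or> (z n \<noteq> 0 \<and> z' n = 0)" using Suc.prems ne by auto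
    have e: "Vv n z + (if z n = 0 then 2^n else 0) = Vv n z' + (if z' n = 0 then 2^n else 0)"
      using Suc.prems(3) unfolding V_Suc .
    show False
      using \<open>(z n = 0 \<and> z' n \<noteq> 0) \<or> (z n \<noteq> 0 \<and> z' n = 0)\<close>
    proof
      assume "z n = 0 \<and> z' n \<noteq> 0" then show False using e lt1 by simp
    next
      assume "z n \<noteq> 0 \<and> z' n = 0" then show False using e lt1 by simp
    qed
  qed
  moreover have "Vv n z = Vv n z'" using Suc.prems(3) calculation unfolding V_Suc by simp
  moreover have "\<forall>m<n. (z m = 0 \<or> z m = a) \<and> (z' m = 0 \<or> z' m = a)" using Suc.prems(2) by simp
  ultimately have "\<forall>m<n. z m = z' m" "z n = z' n" using Suc.IH Suc.prems(1) by blast+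
  then show ?case by (simp add: less_Suc_eq)
qed

lemma relpowp_sym: "(\<And>u v. R u v \<Longrightarrow> R v u) \<Longrightarrow> (R ^^ n) x z \<Longrightarrow> (R ^^ n) z x"
proof (induction n arbitrary: z)
  case 0 then show ?case by simp
next
  case (Suc n)
  from Suc.prems(2) obtain u where "(R ^^ n) x u" "R u z" by (rule relpowp_Suc_E)
  have "R z u" using Suc.prems(1) \<open>R u z\<close> by blast
  moreover have "(R ^^ n) u x" using Suc.IH[OF Suc.prems(1) \<open>(R ^^ n) x u\<close>] .
  ultimately show ?case by (rule relpowp_Suc_I2)
qed

lemma adj_sym: "adj p u v \<Longrightarrow> adj p v u"
  unfolding adj_def by blast

locale cyc =
  fixes N a :: nat and y :: "nat \<Rightarrow> nat"
  assumes N1: "N \<ge> 1" and a1: "a \<ge> 1" and yN0: "y N \<noteq> 0" and yNa: "y N \<noteq> a"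
    and yz: "\<forall>m<N. y m = 0"
begin

definition inC :: "(nat \<Rightarrow> nat) \<Rightarrow> bool" where
  "inC z \<longleftrightarrow> (\<forall>m\<ge>N. z m = y m) \<and> (\<forall>m<N. z m = 0 \<or> z m = a)"

definition rr :: "(nat \<Rightarrow> nat) \<Rightarrow> (nat \<Rightarrow> nat)" where
  "rr z = (if (\<forall>m\<ge>N. z m = y m)
     then (\<lambda>m. if (\<exists>m'. m \<le> m' \<and> m' < N \<and> z m' \<noteq> 0 \<and> z m' \<noteq> a) then 0 else z m)
     else y)"

lemma gen_lead: "gen c z m \<noteq> z m \<Longrightarrow> \<forall>m'<m. z m' = 0"
  by (auto simp: gen_def split: if_splits)

lemma rr_ok: "\<forall>m\<ge>N. z m = y m \<Longrightarrow> rr z n =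
   (if (\<exists>m'. n \<le> m' \<and> m' < N \<and> z m' \<noteq> 0 \<and> z m' \<noteq> a) then 0 else z n)"
  by (simp add: rr_def)

lemma rr_nok: "\<not>(\<forall>m\<ge>N. z m = y m) \<Longrightarrow> rr z = y"
  unfolding rr_def by (rule if_not_P)

lemma rr_inC: "inC z \<Longrightarrow> rr z = z"
  by (rule ext, subst rr_ok) (auto simp: inC_def)

lemma case_NT:
  assumes nt: "\<not>(\<forall>m\<ge>N. z m = y m)" and c1: "c \<ge> 1"
  shows "rr (gen c z) = rr z"
proof (cases "\<forall>m\<ge>N. gen c z m = y m")
  case False
  then show ?thesis using nt by (simp add: rr_nok)
next
  case True
  from nt obtain m where m: "m \<ge> N" "z m \<noteq> y m" by auto
  with True have "gen c z m \<noteq> z m" by auto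
  hence lead: "\<forall>m'<m. z m' = 0" by (rule gen_lead)
  have ca: "c \<noteq> a"
  proof
    assume ca: "c = a"
    show False
    proof (cases "m = N")
      case True
      have "gen c z N = y N" using \<open>\<forall>m\<ge>N. gen c z m = y m\<close> by auto
      then show False using lead True m yN0 yNa ca by (auto simp: gen_def split: if_splits)
    next
      case False
      hence "z N = 0" using lead m by auto
      moreover have "gen c z N = y N" using \<open>\<forall>m\<ge>N. gen c z m = y m\<close> by auto
      moreover have "\<forall>m'<N. z m' = 0" using lead m by auto
      ultimately show False using yNa ca by (auto simp: gen_def)
    qed
  qed
  have gN: "gen c z (N-1) = c" using lead m N1 c1 by (auto simp: gen_def)
  have "rr (gen c z) = y"
  proof
    fix n show "rr (gen c z) n = y n"
    proof (cases "n < N")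
      case True
      then show ?thesis using True gN ca c1 yz \<open>\<forall>m\<ge>N. gen c z m = y m\<close>
        apply (subst rr_ok, simp)
        using N1 by (metis One_nat_def Suc_le_eq Suc_pred c1 diff_less le_simps(2) not_one_le_zero zero_less_one)
    next
      case False
      then show ?thesis using \<open>\<forall>m\<ge>N. gen c z m = y m\<close> by (subst rr_ok) auto
    qed
  qed
  then show ?thesis using nt by (simp add: rr_nok)
qed

lemma case_T2:
  assumes t: "\<forall>m\<ge>N. z m = y m" and nt: "\<not>(\<forall>m\<ge>N. gen c z m = y m)"
  shows "rr (gen c z) = rr z"
proof -
  from nt t obtain m where m: "m \<ge> N" "gen c z m \<noteq> z m" by auto
  hence lead: "\<forall>m'<m. z m' = 0" using gen_lead by blast
  have "z = y"
  proof
    fix n show "z n = y n" using lead m t yz by (cases "n < N") auto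
  qed
  hence "rr z = y" using lead m t by (metis inC_def rr_inC yz)
  then show ?thesis using nt by (simp add: rr_nok)
qed

lemma case_T1i:
  assumes t: "\<forall>m\<ge>N. z m = y m" and t2: "\<forall>m\<ge>N. gen c z m = y m" and iz: "inC z"
    and c1: "c \<ge> 1"
  shows "rr (gen c z) = rr z \<or> (c = a \<and> inC z \<and> inC (gen a z))"
proof (cases "c = a")
  case True
  have "inC (gen a z)" using iz t2 True unfolding inC_def by (auto simp: gen_def)
  then show ?thesis using True iz by auto
next
  case False
  have "rr (gen c z) = z"
  proof
    fix n show "rr (gen c z) n = z n"
    proof (cases "n < N")
      case True
      show ?thesis
      proof (cases "\<exists>m'. n \<le> m' \<and> m' < N \<and> gen c z m' \<noteq> 0 \<and> gen c z m' \<noteq> a")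
        case True
        then obtain m' where m': "n \<le> m'" "m' < N" "gen c z m' \<noteq> 0" "gen c z m' \<noteq> a" by auto
        have "gen c z m' \<noteq> z m'" using m' iz unfolding inC_def by auto
        hence lead: "\<forall>k<m'. z k = 0" by (rule gen_lead)
        have "z m' = 0" using m' iz lead \<open>c \<noteq> a\<close> unfolding inC_def by (auto simp: gen_def split: if_splits)
        hence "z n = 0" using lead m' by (cases "n = m'") auto
        then show ?thesis using True t2 by (subst rr_ok) auto
      next
        case False
        hence gn: "gen c z n = 0 \<or> gen c z n = a" using \<open>n < N\<close> by auto
        have "gen c z n = z n" using gn iz \<open>n < N\<close> \<open>c \<noteq> a\<close> c1 unfolding inC_def
          by (auto simp: gen_def split: if_splits)
        then show ?thesis using False t2 by (subst rr_ok) auto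
      qed
    next
      case False
      then show ?thesis using t t2 by (subst rr_ok) auto
    qed
  qed
  then show ?thesis using rr_inC[OF iz] by auto
qed

lemma case_T1ii:
  assumes t: "\<forall>m\<ge>N. z m = y m" and t2: "\<forall>m\<ge>N. gen c z m = y m" and iz: "\<not> inC z"
    and c1: "c \<ge> 1"
  shows "rr (gen c z) = rr z"
proof -
  from iz t obtain i0 where i0: "i0 < N" "z i0 \<noteq> 0" "z i0 \<noteq> a" unfolding inC_def by auto
  define f where "f = (LEAST f. z f \<noteq> 0)"
  have zf: "z f \<noteq> 0" unfolding f_def by (rule LeastI[of _ i0]) (use i0 in auto)
  have fi0: "f \<le> i0" unfolding f_def by (rule Least_le) (use i0 in auto)
  have bef: "\<forall>m<f. z m = 0" unfolding f_def using not_less_Least by blast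
  have g_lt: "gen c z m = c" if "m < f" for m using bef that by (auto simp: gen_def)
  have g_f: "gen c z f = (if z f = c then 0 else z f)" using bef zf by (auto simp: gen_def)
  have g_gt: "gen c z m = z m" if "m > f" for m using zf that by (auto simp: gen_def)
  show ?thesis
  proof
    fix n show "rr (gen c z) n = rr z n"
    proof (cases "n > f")
      case True
      have ge: "\<forall>m'. n \<le> m' \<longrightarrow> gen c z m' = z m'" using True g_gt by auto
      have "(\<exists>m'. n \<le> m' \<and> m' < N \<and> gen c z m' \<noteq> 0 \<and> gen c z m' \<noteq> a)
         = (\<exists>m'. n \<le> m' \<and> m' < N \<and> z m' \<noteq> 0 \<and> z m' \<noteq> a)" using ge by metis
      then show ?thesis unfolding rr_ok[OF t] rr_ok[OF t2] using ge by auto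
    next
      case False
      have rz: "rr z n = 0" using t i0 fi0 False by (subst rr_ok) auto
      show ?thesis
      proof (cases "\<exists>m'. n \<le> m' \<and> m' < N \<and> gen c z m' \<noteq> 0 \<and> gen c z m' \<noteq> a")
        case True
        then show ?thesis using rz t2 by (simp add: rr_ok)
      next
        case nE: False
        have "gen c z n = 0"
        proof (cases "n < f")
          case True
          have "gen c z n = c" using g_lt True by auto
          hence ca: "c = a" using nE True fi0 i0 c1 by fastforce
          have "gen c z f = 0 \<or> gen c z f = a" using nE True fi0 i0 by auto
          hence "z f = a" using g_f zf ca by (auto split: if_splits)
          hence "i0 > f" using fi0 i0 by (cases "i0 = f") auto
          hence "gen c z i0 = z i0" using g_gt by auto
          then show ?thesis using nE i0 True fi0 by auto
        next
          case False
          hence nf: "n = f" using \<open>\<not> f < n\<close> by auto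
          show ?thesis
          proof (cases "z f = c")
            case True then show ?thesis using g_f nf by auto
          next
            case False
            have "gen c z f = 0 \<or> gen c z f = a" using nE nf fi0 i0 by auto
            hence "z f = a" using g_f zf False by (auto split: if_splits)
            hence "i0 > f" using fi0 i0 by (cases "i0 = f") auto
            hence "gen c z i0 = z i0" using g_gt by auto
            then show ?thesis using nE i0 nf fi0 by auto
          qed
        qed
        then show ?thesis using rz nE t2 by (simp add: rr_ok)
      qed
    qed
  qed
qed

lemma r_gen:
  assumes c1: "c \<ge> 1"
  shows "rr (gen c z) = rr z \<or> (c = a \<and> inC z \<and> inC (gen a z))"
proof (cases "\<forall>m\<ge>N. z m = y m")
  case False then show ?thesis using case_NT c1 by auto
next
  case t: True
  show ?thesis
  proof (cases "\<forall>m\<ge>N. gen c z m = y m")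
    case False then show ?thesis using case_T2 t by auto
  next
    case True
    then show ?thesis using case_T1i case_T1ii t c1 by blast
  qed
qed

lemma inC_y: "inC y"
  using yz unfolding inC_def by auto

lemma inj_C: "inC z \<Longrightarrow> inC z' \<Longrightarrow> Vv N z = Vv N z' \<Longrightarrow> z = z'"
proof
  fix n assume iz: "inC z" "inC z'" "Vv N z = Vv N z'"
  show "z n = z' n"
  proof (cases "n < N")
    case True
    have "\<forall>m<N. z m = z' m" using V_inj_aux[of a N z z'] iz a1 unfolding inC_def by auto
    then show ?thesis using True by auto
  next
    case False then show ?thesis using iz unfolding inC_def by auto
  qed
qed

lemma odo:
  assumes iz: "inC z"
  shows "inC (gen a z) \<and> Vv N (gen a z) mod 2^N = (Vv N z + 1) mod 2^N"
proof -
  have tl: "gen a z m = z m" if "m \<ge> N" for m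
  proof (rule ccontr)
    assume "gen a z m \<noteq> z m"
    hence lead: "\<forall>m'<m. z m' = 0" using gen_lead by blast
    show False
    proof (cases "m = N")
      case True then show False using \<open>gen a z m \<noteq> z m\<close> iz yN0 yNa lead
        unfolding inC_def by (auto simp: gen_def)
    next
      case False then show False using lead that iz yN0 unfolding inC_def by auto
    qed
  qed
  have iC: "inC (gen a z)" using iz tl unfolding inC_def by (auto simp: gen_def)
  have "Vv N (gen a z) mod 2^N = (Vv N z + 1) mod 2^N"
  proof (cases "\<forall>m<N. z m = 0")
    case True
    have "Vv N z = 2^N - 1" unfolding Vv_def using True by (simp add: geo2)
    moreover have "Vv N (gen a z) = 0" unfolding Vv_def using True a1 by (auto simp: gen_def)
    ultimately show ?thesis by simp
  next
    case False
    then obtain i where i: "i < N" "z i \<noteq> 0" by auto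
    define f where "f = (LEAST f. z f \<noteq> 0)"
    have zf: "z f \<noteq> 0" unfolding f_def by (rule LeastI[of _ i]) (use i in auto)
    have fi: "f \<le> i" unfolding f_def by (rule Least_le) (use i in auto)
    have bef: "\<forall>m<f. z m = 0" unfolding f_def using not_less_Least by blast
    have fN: "f < N" using fi i by auto
    have zfa: "z f = a" using zf fN iz unfolding inC_def by auto
    have g_lt: "gen a z m = a" if "m < f" for m using bef that by (auto simp: gen_def)
    have g_f: "gen a z f = 0" using bef zfa by (auto simp: gen_def)
    have g_gt: "gen a z m = z m" if "m > f" for m using zf that by (auto simp: gen_def)
    have R: "(\<Sum>m\<in>{Suc f..<N}. if gen a z m = 0 then 2^m else 0) = (\<Sum>m\<in>{Suc f..<N}. if z m = 0 then (2::nat)^m else 0)"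
      by (rule sum.cong) (auto simp: g_gt)
    have "Vv N (gen a z) = 0 + 2^f + (\<Sum>m\<in>{Suc f..<N}. if z m = 0 then (2::nat)^m else 0)"
      unfolding Vv_def sum_split3[OF fN] R using g_lt g_f a1 by simp
    moreover have "Vv N z = (2^f - 1) + 0 + (\<Sum>m\<in>{Suc f..<N}. if z m = 0 then (2::nat)^m else 0)"
      unfolding Vv_def sum_split3[OF fN] using bef zf by (simp add: geo2)
    ultimately have "Vv N (gen a z) = Vv N z + 1" by simp
    then show ?thesis by simp
  qed
  then show ?thesis using iC by simp
qed

lemma odo_iter: "inC z \<Longrightarrow> inC ((gen a ^^ q) z) \<and> Vv N ((gen a ^^ q) z) mod 2^N = (Vv N z + q) mod 2^N"
proof (induction q)
  case 0 then show ?case by simp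
next
  case (Suc q)
  then have "inC ((gen a ^^ q) z)" "Vv N ((gen a ^^ q) z) mod 2^N = (Vv N z + q) mod 2^N" by auto
  with odo[of "(gen a ^^ q) z"] show ?case by (simp, metis mod_Suc_eq)
qed

lemma path_iter: "a \<le> p \<Longrightarrow> (adj p ^^ q) z ((gen a ^^ q) z)"
proof (induction q)
  case 0 then show ?case by simp
next
  case (Suc q)
  have "adj p ((gen a ^^ q) z) (gen a ((gen a ^^ q) z))" using Suc.prems a1 unfolding adj_def by auto
  then show ?case using Suc by (auto intro: relpowp_Suc_I)
qed

definition Phi where "Phi z = Vv N (rr z)"

lemma step_gen: "c \<ge> 1 \<Longrightarrow> int (2^N) dvd (int (Phi (gen c z)) - int (Phi z)) \<or>
   int (2^N) dvd (int (Phi (gen c z)) - int (Phi z) - 1)"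
proof -
  assume c1: "c \<ge> 1"
  from r_gen[OF c1, of z] show ?thesis
  proof
    assume "rr (gen c z) = rr z" then show ?thesis by (simp add: Phi_def)
  next
    assume h: "c = a \<and> inC z \<and> inC (gen a z)"
    hence "Vv N (gen a z) mod 2^N = (Vv N z + 1) mod 2^N" using odo by auto
    hence "int (Vv N (gen a z)) mod 2^N = (int (Vv N z) + 1) mod 2^N"
      by (metis of_nat_1 of_nat_add of_nat_mod of_nat_numeral of_nat_power)
    hence "int (2^N) dvd int (Vv N (gen a z)) - (int (Vv N z) + 1)"
      using mod_eq_dvd_iff by (metis of_nat_numeral of_nat_power)
    then show ?thesis using h rr_inC by (simp add: Phi_def algebra_simps)
  qed
qed

lemma step_adj: "adj p u v \<Longrightarrow> \<exists>d::int. \<bar>d\<bar> \<le> 1 \<and> int (2^N) dvd (int (Phi v) - int (Phi u) - d)"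
proof -
  assume "adj p u v"
  then obtain c where c: "c \<ge> 1" "v = gen c u \<or> u = gen c v" unfolding adj_def by auto
  from c(2) show ?thesis
  proof
    assume "v = gen c u"
    then show ?thesis using step_gen[OF c(1), of u]
      by (metis abs_0 abs_one diff_zero order_refl zero_le_one)
  next
    assume uv: "u = gen c v"
    from step_gen[OF c(1), of v] show ?thesis
    proof
      assume "int (2^N) dvd (int (Phi (gen c v)) - int (Phi v))"
      then show ?thesis using uv by (intro exI[of _ 0]) (auto simp: dvd_diff_commute)
    next
      assume h: "int (2^N) dvd (int (Phi (gen c v)) - int (Phi v) - 1)"
      have "int (Phi v) - int (Phi u) - (-1) = - (int (Phi (gen c v)) - int (Phi v) - 1)" using uv by simp
      then show ?thesis using h by (intro exI[of _ "-1"]) (simp only: dvd_minus_iff, simp)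
    qed
  qed
qed

lemma walk: "(adj p ^^ L) u v \<Longrightarrow> \<exists>S::int. \<bar>S\<bar> \<le> int L \<and> int (2^N) dvd (int (Phi v) - int (Phi u) - S)"
proof (induction L arbitrary: v)
  case 0 then show ?case by (intro exI[of _ 0]) simp
next
  case (Suc L)
  from Suc.prems obtain w where w: "(adj p ^^ L) u w" "adj p w v" by (rule relpowp_Suc_E)
  from Suc.IH[OF w(1)] obtain S where S: "\<bar>S\<bar> \<le> int L" "int (2^N) dvd (int (Phi w) - int (Phi u) - S)" by auto
  from step_adj[OF w(2)] obtain d where d: "\<bar>d\<bar> \<le> 1" "int (2^N) dvd (int (Phi v) - int (Phi w) - d)" by auto
  have "int (2^N) dvd (int (Phi v) - int (Phi u) - (S + d))"
    using dvd_add[OF S(2) d(2)] by (simp add: algebra_simps)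
  moreover have "\<bar>S + d\<bar> \<le> int (Suc L)" using S(1) d(1) by simp
  ultimately show ?case by blast
qed

lemma dist_C:
  assumes ap: "a \<le> p" and ix: "inC x"
  shows "gdist p x y = min (2^N - 1 - Vv N x) (Vv N x + 1)"
proof -
  define V where "V = Vv N x"
  define q where "q = 2^N - 1 - V"
  have Vlt: "V < 2^N" unfolding V_def by (rule V_lt)
  have Vy: "Vv N y = 2^N - 1" unfolding Vv_def using yz by (simp add: geo2)
  have p1: "(adj p ^^ q) x y"
  proof -
    have it: "inC ((gen a ^^ q) x)" "Vv N ((gen a ^^ q) x) mod 2^N = (V + q) mod 2^N"
      using odo_iter[OF ix, of q] unfolding V_def by auto
    have "V + q = 2^N - 1" unfolding q_def using Vlt by simp
    hence "Vv N ((gen a ^^ q) x) = 2^N - 1" using it(2) V_lt[of N "(gen a ^^ q) x"] by simp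
    hence "(gen a ^^ q) x = y" using inj_C[OF it(1) inC_y] Vy by simp
    then show ?thesis using path_iter[OF ap, of q x] by simp
  qed
  have p2: "(adj p ^^ (V+1)) x y"
  proof -
    have it: "inC ((gen a ^^ (V+1)) y)" "Vv N ((gen a ^^ (V+1)) y) mod 2^N = (2^N - 1 + (V+1)) mod 2^N"
      using odo_iter[OF inC_y, of "V+1"] Vy by auto
    have "(2^N - 1 + (V+1)) mod 2^N = V" using Vlt by simp
    hence "Vv N ((gen a ^^ (V+1)) y) = V" using it(2) V_lt[of N "(gen a ^^ (V+1)) y"] by simp
    hence "(gen a ^^ (V+1)) y = x" using inj_C[OF it(1) ix] unfolding V_def by simp
    then have "(adj p ^^ (V+1)) y x" using path_iter[OF ap, of "V+1" y] by simp
    then show ?thesis using relpowp_sym[of "adj p"] adj_sym by blast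
  qed
  have le1: "gdist p x y \<le> q" unfolding gdist_def by (rule Least_le) (rule p1)
  have le2: "gdist p x y \<le> V + 1" unfolding gdist_def by (rule Least_le) (rule p2)
  have ex: "(adj p ^^ gdist p x y) x y" unfolding gdist_def by (rule LeastI) (rule p1)
  from walk[OF ex] obtain S where S: "\<bar>S\<bar> \<le> int (gdist p x y)" "int (2^N) dvd (int (Phi y) - int (Phi x) - S)" by auto
  have "Phi y = 2^N - 1" unfolding Phi_def using rr_inC[OF inC_y] Vy by simp
  moreover have "Phi x = V" unfolding Phi_def V_def using rr_inC[OF ix] by simp
  ultimately have "int (2^N) dvd (int q - S)" using S(2) Vlt unfolding q_def by (simp add: of_nat_diff algebra_simps)
  then obtain k where k: "int q - S = int (2^N) * k" by (elim dvdE)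
  define P where "P = int (2^N)"
  have qV: "int q + int V + 1 = P" unfolding q_def P_def using Vlt by (simp add: of_nat_diff)
  have kP: "int q - S = P * k" using k P_def by simp
  have "\<bar>S\<bar> \<ge> min (int q) (int V + 1)"
  proof (cases "k = 0")
    case True then show ?thesis using k by simp
  next
    case False
    show ?thesis
    proof (cases "k \<ge> 1")
      case True
      have "P * k \<ge> P * 1" by (rule mult_left_mono) (use True P_def in auto)
      then show ?thesis using kP qV by linarith
    next
      case False
      hence "k \<le> -1" using \<open>k \<noteq> 0\<close> by simp
      have "P * k \<le> P * (-1)" by (rule mult_left_mono) (use \<open>k \<le> -1\<close> P_def in auto)
      then show ?thesis using kP qV by linarith
    qed
  qed
  hence "gdist p x y \<ge> min q (V + 1)" using S(1) by linarith
  then show ?thesis using le1 le2 unfolding q_def V_def by simp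
qed

end
lemma pow_odd_eq_aux: "a < b \<Longrightarrow> (2::nat)^a * o1 = 2^b * o2 \<Longrightarrow> odd o1 \<Longrightarrow> False"
proof -
  assume ab: "a < b" and e: "(2::nat)^a * o1 = 2^b * o2" and o: "odd o1"
  have "(2::nat)^b = 2^a * 2^(b-a)" using ab by (simp add: power_add[symmetric])
  hence "o1 = 2^(b-a) * o2" using e by simp
  moreover have "even ((2::nat)^(b-a) * o2)" using ab by simp
  ultimately show False using o by simp
qed

lemma pow_odd_eq: "(2::nat)^a * o1 = 2^b * o2 \<Longrightarrow> odd o1 \<Longrightarrow> odd o2 \<Longrightarrow> a = b"
  using pow_odd_eq_aux[of a b o1 o2] pow_odd_eq_aux[of b a o2 o1] by (metis linorder_neqE_nat)

lemma Npos_Suc: "Npos k us (Suc n) = Npos k us n + 1 + length (us (Suc n))"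
  by (simp add: Npos_def)

lemma dseq_form:
  assumes d: "decomp p w k av us"
  shows "\<exists>od. odd od \<and> dseq p w k us n = 2^(Npos k us n) * od"
proof -
  define M where "M = Npos k us n"
  define N where "N = Npos k us (Suc n)"
  define a where "a = av (Suc n)"
  define x where "x = wj w k us n"
  define y where "y = wj w k us (Suc n)"
  have NM: "N = M + 1 + length (us (Suc n))" unfolding N_def M_def by (rule Npos_Suc)
  have d1: "a \<in> {1..p}" "av (Suc (Suc n)) \<noteq> a" "set (us (Suc n)) \<subseteq> {0, a}" "w M = a"
     "\<forall>i<length (us (Suc n)). w (M + 1 + i) = us (Suc n) ! i"
    using d unfolding decomp_def a_def M_def by (auto dest: spec[of _ "Suc n"])
  have d2: "av (Suc (Suc n)) \<in> {1..p}" "w N = av (Suc (Suc n))"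
    using d unfolding decomp_def N_def by (auto dest: spec[of _ "Suc (Suc n)"])
  interpret cyc N a y
  proof
    show "N \<ge> 1" using NM by simp
    show "a \<ge> 1" using d1 by simp
    show "y N \<noteq> 0" using d2 unfolding y_def wj_def N_def by auto
    show "y N \<noteq> a" using d2 d1 unfolding y_def wj_def N_def by auto
    show "\<forall>m<N. y m = 0" unfolding y_def wj_def N_def by auto
  qed
  have xM: "x m = (if m < M then 0 else w m)" for m unfolding x_def wj_def M_def by simp
  have yM: "y m = (if m < N then 0 else w m)" for m unfolding y_def wj_def N_def by simp
  have mid: "w m = 0 \<or> w m = a" if "M < m" "m < N" for m
  proof -
    define i where "i = m - M - 1"
    have "i < length (us (Suc n))" "m = M + 1 + i" using that NM unfolding i_def by auto
    then have "w m = us (Suc n) ! i" using d1(5) by simp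
    then show ?thesis using d1(3) \<open>i < length (us (Suc n))\<close> nth_mem by fastforce
  qed
  have ix: "inC x"
    unfolding inC_def
  proof (intro conjI allI impI)
    fix m assume "N \<le> m" then show "x m = y m" using xM yM NM by auto
  next
    fix m assume "m < N"
    then show "x m = 0 \<or> x m = a" using xM mid d1(4) by (cases "m < M"; cases "m = M") auto
  qed
  have dist: "dseq p w k us n = min (2^N - 1 - Vv N x) (Vv N x + 1)"
    unfolding dseq_def x_def[symmetric] using dist_C[OF _ ix] d1(1)
    by (simp add: y_def)
  define R where "R = (\<Sum>m\<in>{Suc M..<N}. if x m = 0 then (2::nat)^m else 0)"
  have MN: "M < N" using NM by simp
  have VR: "Vv N x = (2^M - 1) + R"
    unfolding Vv_def sum_split3[OF MN] R_def using xM d1(1,4) by (simp add: geo2)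
  have "2^(Suc M) dvd R" unfolding R_def
  proof (rule dvd_sum)
    fix m assume "m \<in> {Suc M..<N}"
    hence "(2::nat)^Suc M dvd 2^m" by (intro le_imp_power_dvd) auto
    then show "(2::nat)^Suc M dvd (if x m = 0 then 2^m else 0)" by simp
  qed
  then obtain r where r: "R = 2^(Suc M) * r" by (elim dvdE)
  have e1: "Vv N x + 1 = 2^M * (2*r + 1)" using VR r by (simp add: algebra_simps)
  have Vlt: "Vv N x < 2^N" by (rule V_lt)
  have pN: "(2::nat)^N = 2^M * 2^(N-M)" using MN by (simp add: power_add[symmetric])
  have ev: "even ((2::nat)^(N-M))" using MN by simp
  have "(2::nat)^M*(2*r+1) \<le> 2^M * 2^(N-M)" using Vlt e1 pN by linarith
  hence le: "2*r+1 \<le> (2::nat)^(N-M)" using mult_le_cancel1[of "(2::nat)^M" "2*r+1" "2^(N-M)"] by simp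
  have ne: "2*r+1 \<noteq> (2::nat)^(N-M)"
  proof
    assume h: "2*r+1 = (2::nat)^(N-M)"
    have "even (2*r+1::nat)" using ev by (simp only: h)
    then show False by simp
  qed
  have gt: "2^(N-M) > 2*r+1" using le ne by simp
  have e2: "2^N - 1 - Vv N x = 2^M * (2^(N-M) - (2*r+1))"
    using e1 pN by (simp add: diff_mult_distrib2)
  have o2: "odd (2^(N-M) - (2*r+1) :: nat)" using ev gt by simp
  show ?thesis
  proof (cases "2^N - 1 - Vv N x \<le> Vv N x + 1")
    case True
    then show ?thesis unfolding M_def[symmetric] using dist e2 o2 by (intro exI[of _ "2^(N-M) - (2*r+1)"]) simp
  next
    case False
    then show ?thesis unfolding M_def[symmetric] using dist e1 by (intro exI[of _ "2*r+1"]) simp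
  qed
qed

theorem proposition4p20:
  fixes p :: nat and u v :: "nat \<Rightarrow> nat"
    and ku kv :: nat and au av :: "nat \<Rightarrow> nat" and uu uv :: "nat \<Rightarrow> nat list"
  assumes "p \<ge> 1"
    and "u \<in> E1 p" and "v \<in> E1 p"
    and "decomp p u ku au uu" and "decomp p v kv av uv"
    and "compatible (dseq p u ku uu) (dseq p v kv uv)"
  shows "compatible (Lseq ku uu) (Lseq kv uv)"
proof -
  from assms(6) obtain l h where lh: "\<forall>n. dseq p u ku uu (l+n) = dseq p v kv uv (h+n)"
    unfolding compatible_def by auto
  have "Lseq ku uu (l+n) = Lseq kv uv (h+n)" for n
  proof -
    obtain o1 where o1: "odd o1" "dseq p u ku uu (l + Suc n) = 2^(Npos ku uu (l + Suc n)) * o1"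
      using dseq_form[OF assms(4)] by blast
    obtain o2 where o2: "odd o2" "dseq p v kv uv (h + Suc n) = 2^(Npos kv uv (h + Suc n)) * o2"
      using dseq_form[OF assms(5)] by blast
    have "Npos ku uu (l + Suc n) = Npos kv uv (h + Suc n)"
      using pow_odd_eq[of _ o1 _ o2] o1 o2 lh by metis
    then show ?thesis unfolding Lseq_def by simp
  qed
  then show ?thesis unfolding compatible_def by blast
qed
end
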